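(* Let $(s_n)_{n\ge1}$ be a sequence of positive real numbers with $\lim_{n\to\infty} s_n/n=\infty$. Then there exists an irrational $\beta\in\mathbb R\setminus\mathbb Q$ such that the rotation $T(x)=x+\beta \pmod 1$ of $[0,1)$ satisfies \[\liminf_{n\to\infty} s_n\,\|T^n(x)-y\|=\infty\quad\text{for } \lambda\times\lambda\text{-almost every }(x,y)\in[0,1)^2,\] where $\lambda$ is Lebesgue measure.
   Context: $\|t\|=\min_{m\in\mathbb Z}|t-m|$ denotes the distance from $t\in\mathbb R$ to the nearest integer (the circle metric on $[0,1)$). *)

theory Defs
  imports "HOL-Analysis.Analysis"
begin

definition circ_norm :: "real \<Rightarrow> real" where
  "circ_norm t = (INF m::int. \<bar>t - of_int m\<bar>)"

definition rot :: "real \<Rightarrow> real \<Rightarrow> real" where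
  "rot \<beta> x = frac (x + \<beta>)"

end

theory Submission
  imports Defs
begin



lemma cn_eq: "circ_norm t = \<bar>t - of_int (round t)\<bar>"
  unfolding circ_norm_def
proof (rule antisym)
  show "(INF m::int. \<bar>t - of_int m\<bar>) \<le> \<bar>t - of_int (round t)\<bar>"
    by (rule cINF_lower) (auto intro: bdd_belowI[of _ 0])
  show "\<bar>t - of_int (round t)\<bar> \<le> (INF m::int. \<bar>t - of_int m\<bar>)"
    by (rule cINF_greatest) (auto simp: round_diff_minimal)
qed

lemma cn_le: "circ_norm t \<le> \<bar>t - of_int m\<bar>"
  by (simp add: cn_eq round_diff_minimal)

lemma cn_shift: "circ_norm (t + of_int m) = circ_norm t"
proof (rule antisym)
  have "circ_norm (t + of_int m) \<le> \<bar>t + of_int m - of_int (round t + m)\<bar>" by (rule cn_le)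
  then show "circ_norm (t + of_int m) \<le> circ_norm t" by (simp add: cn_eq)
  have "circ_norm t \<le> \<bar>t - of_int (round (t + of_int m) - m)\<bar>" by (rule cn_le)
  then show "circ_norm t \<le> circ_norm (t + of_int m)" by (simp add: cn_eq)
qed

lemma cn_tri: "circ_norm (a + b) \<ge> circ_norm a - \<bar>b\<bar>"
proof -
  have "circ_norm a \<le> \<bar>a - of_int (round (a+b))\<bar>" by (rule cn_le)
  then show ?thesis by (simp add: cn_eq)
qed

lemma cn_mult: "circ_norm (of_nat q * w) \<le> of_nat q * circ_norm w"
proof -
  have "circ_norm (of_nat q * w) \<le> \<bar>of_nat q * w - of_int (int q * round w)\<bar>" by (rule cn_le)
  also have "\<dots> = of_nat q * \<bar>w - of_int (round w)\<bar>"
    by (simp add: abs_mult right_diff_distrib[symmetric])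
  finally show ?thesis by (simp add: cn_eq)
qed

lemma rot_iter: "\<exists>i::int. (rot b ^^ n) x = x + real n * b + of_int i"
proof (induction n)
  case 0 then show ?case by (auto intro: exI[of _ 0])
next
  case (Suc n)
  then obtain i where i: "(rot b ^^ n) x = x + real n * b + of_int i" by blast
  have "(rot b ^^ Suc n) x = frac (x + real n * b + of_int i + b)" by (simp add: i rot_def)
  also have "\<dots> = x + real (Suc n) * b + of_int (i - \<lfloor>x + real n * b + of_int i + b\<rfloor>)"
    by (simp add: frac_def algebra_simps)
  finally show ?case by blast
qed




definition thr :: "(nat \<Rightarrow> real) \<Rightarrow> real \<Rightarrow> nat \<Rightarrow> nat" where
  "thr s c Q = (SOME T. T > Q \<and> (\<forall>n\<ge>T. c * real n \<le> s n))"

primrec qq :: "(nat \<Rightarrow> real) \<Rightarrow> nat \<Rightarrow> nat" where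
  "qq s 0 = 1"
| "qq s (Suc k) = thr s (real (qq s k * (k+1) * 4^(k+3))) (qq s k) * qq s k * 2^(k+3)"

fun LL :: "(nat \<Rightarrow> real) \<Rightarrow> nat \<Rightarrow> nat" where
  "LL s 0 = 0"
| "LL s (Suc k) = thr s (real (qq s k * (k+1) * 4^(k+3))) (qq s k)"

lemma thr_spec:
  assumes "filterlim (\<lambda>n. s n / real n) at_top sequentially"
  shows "thr s c Q > Q \<and> (\<forall>n\<ge>thr s c Q. c * real n \<le> s n)"
proof -
  have "eventually (\<lambda>n. s n / real n \<ge> c) sequentially"
    using assms by (simp add: filterlim_at_top)
  then obtain N where N: "\<And>n. n \<ge> N \<Longrightarrow> s n / real n \<ge> c" by (auto simp: eventually_sequentially)
  define T where "T = max N (Q + 1)"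
  have "T > Q \<and> (\<forall>n\<ge>T. c * real n \<le> s n)"
  proof safe
    show "Q < T" by (simp add: T_def)
    fix n assume "T \<le> n"
    then have "n \<ge> N" "n \<ge> 1" by (auto simp: T_def)
    with N[of n] show "c * real n \<le> s n" by (simp add: field_simps)
  qed
  then show ?thesis unfolding thr_def by (rule someI)
qed

context
  fixes s :: "nat \<Rightarrow> real"
  assumes lim: "filterlim (\<lambda>n. s n / real n) at_top sequentially"
begin

lemma qq_pos: "qq s k \<ge> 1"
proof (induction k)
  case (Suc k)
  have "thr s (real (qq s k * (k+1) * 4^(k+3))) (qq s k) > qq s k" using thr_spec[OF lim] by blast
  then have "thr s (real (qq s k * (k+1) * 4^(k+3))) (qq s k) \<ge> 1" by simp
  with Suc show ?case by simp
qed simp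

lemma qq_Suc: "qq s (Suc k) = LL s (Suc k) * qq s k * 2^(k+3)" by simp

lemma LL_gt: "LL s (Suc k) > qq s k" using thr_spec[OF lim] by simp

lemma LL_bound: "n \<ge> LL s (Suc k) \<Longrightarrow> real (qq s k * (k+1) * 4^(k+3)) * real n \<le> s n"
  using thr_spec[OF lim] by simp

lemma LL_pos: "LL s (Suc k) \<ge> 1" using LL_gt[of k] qq_pos[of k] by simp

lemma qq_ge_LL: "qq s (Suc k) \<ge> LL s (Suc k)"
proof -
  have "LL s (Suc k) * 1 * 1 \<le> LL s (Suc k) * qq s k * 2^(k+3)"
    by (intro mult_mono) (use qq_pos[of k] in auto)
  then show ?thesis by simp
qed

lemma LL_smono: "strict_mono (LL s)"
proof (rule strict_monoI_Suc)
  fix k show "LL s k < LL s (Suc k)"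
  proof (cases k)
    case 0 then show ?thesis using LL_pos[of 0] by simp
  next
    case (Suc j)
    have "LL s (Suc j) < LL s (Suc (Suc j))" using qq_ge_LL[of j] LL_gt[of "Suc j"] by linarith
    then show ?thesis using Suc by simp
  qed
qed

lemma qq_grow: "real (qq s (Suc k)) \<ge> real (qq s k) * 2^(k+3)"
proof -
  have "qq s k * 2^(k+3) * 1 \<le> qq s k * 2^(k+3) * LL s (Suc k)"
    by (intro mult_left_mono) (use LL_pos[of k] in auto)
  then have "qq s k * 2^(k+3) \<le> qq s (Suc k)" by (simp add: mult_ac)
  then show ?thesis by (metis of_nat_le_iff of_nat_mult of_nat_numeral of_nat_power)
qed

lemma qq_ge_pow: "real (qq s k) \<ge> 2^k"
proof (induction k)
  case (Suc k)
  have "(2::real)^Suc k \<le> real (qq s k) * 2^(k+3)"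
    using Suc qq_pos[of k] by (simp add: power_add) 
  with qq_grow[of k] show ?case by linarith
qed simp

lemma qq_dvd: "j \<le> k \<Longrightarrow> qq s j dvd qq s k"
proof (induction k)
  case (Suc k)
  then show ?case by (cases "j = Suc k") (auto simp: le_Suc_eq)
qed simp

end



declare qq.simps(2)[simp del]

definition bet :: "(nat \<Rightarrow> real) \<Rightarrow> real" where
  "bet s = (\<Sum>k. 1 / real (qq s k))"

context
  fixes s :: "nat \<Rightarrow> real"
  assumes lim: "filterlim (\<lambda>n. s n / real n) at_top sequentially"
begin

lemma qq_double: "real (qq s (Suc n)) \<ge> 2 * real (qq s n)"
proof -
  have "2 * real (qq s n) \<le> real (qq s n) * 2^(n+3)"
  proof -
    have "(2::real) \<le> 2^(n+3)" proof -
      have "1 \<le> (2::real)^n" by simp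
      moreover have "(2::real)^(n+3) = 8 * 2^n" by (simp add: power_add)
      ultimately show ?thesis by linarith
    qed
    then show ?thesis by (metis mult.commute mult_right_mono of_nat_0_le_iff)
  qed
  then show ?thesis using qq_grow[OF lim, of n] by linarith
qed

lemma qq_shift: "real (qq s (j + i)) \<ge> 2^i * real (qq s j)"
proof (induction i)
  case (Suc i)
  have "2 ^ Suc i * real (qq s j) \<le> 2 * real (qq s (j+i))" using Suc by simp
  also have "\<dots> \<le> real (qq s (Suc (j+i)))"
    by (rule qq_double)
  finally show ?case by simp
qed simp

lemma inv_qq_le: "1 / real (qq s (j + i)) \<le> (1/2)^i / real (qq s j)"
proof -
  have p: "real (qq s j) > 0" using qq_pos[OF lim, of j] by simp
  have "2^i * real (qq s j) \<le> real (qq s (j + i))" by (rule qq_shift)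
  then have "1 / real (qq s (j + i)) \<le> 1 / (2^i * real (qq s j))"
    using p qq_pos[OF lim, of "j+i"] by (intro divide_left_mono) (auto intro!: mult_pos_pos)
  then show ?thesis by (simp add: power_divide)
qed

lemma summ_shift: "summable (\<lambda>k. 1 / real (qq s (k + j)))"
proof (rule summable_comparison_test')
  show "summable (\<lambda>k. (1/2)^k / real (qq s j))"
    by (intro summable_divide summable_geometric) simp
  fix k show "norm (1 / real (qq s (k + j))) \<le> (1/2)^k / real (qq s j)"
    using inv_qq_le[of j k] by (simp add: add.commute)
qed

lemma summ: "summable (\<lambda>k. 1 / real (qq s k))"
  using summ_shift[of 0] by simp

definition "ee m = (\<Sum>k. 1 / real (qq s (k + Suc m)))"

lemma bet_split: "bet s = (\<Sum>k<Suc m. 1 / real (qq s k)) + ee m"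
  unfolding bet_def ee_def using suminf_split_initial_segment[OF summ, of "Suc m"] by simp

lemma ee_pos: "ee m > 0"
  unfolding ee_def
  using qq_pos[OF lim] by (intro suminf_pos[OF summ_shift]) (simp del: qq.simps add: Suc_le_eq)

lemma ee_le: "ee m \<le> 2 / real (qq s (Suc m))"
proof -
  have "ee m \<le> (\<Sum>k. (1/2)^k / real (qq s (Suc m)))"
    unfolding ee_def
  proof (rule suminf_le)
    show "summable (\<lambda>k. (1/2)^k / real (qq s (Suc m)))"
      by (intro summable_divide summable_geometric) simp
    fix k show "1 / real (qq s (k + Suc m)) \<le> (1/2)^k / real (qq s (Suc m))"
      using inv_qq_le[of "Suc m" k] by (simp add: add.commute)
  qed (rule summ_shift)
  also have "\<dots> = 2 / real (qq s (Suc m))"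
  proof -
    have g: "(\<Sum>k. (1/2::real)^k) = 2" using suminf_geometric[of "1/2::real"] by simp
    show ?thesis using suminf_divide[OF summable_geometric[of "1/2::real"], of "real (qq s (Suc m))"] g by simp
  qed
  finally show ?thesis .
qed

lemma partial_int: "\<exists>P::int. real (qq s m) * (\<Sum>k<Suc m. 1 / real (qq s k)) = of_int P"
proof -
  have "real (qq s m) * (\<Sum>k<Suc m. 1 / real (qq s k)) = (\<Sum>k<Suc m. real (qq s m div qq s k))"
    unfolding sum_distrib_left
  proof (rule sum.cong)
    fix k assume "k \<in> {..<Suc m}"
    then have "qq s k dvd qq s m" by (intro qq_dvd[OF lim]) simp
    then show "real (qq s m) * (1 / real (qq s k)) = real (qq s m div qq s k)"
      using qq_pos[OF lim, of k] by (simp add: real_of_nat_div)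
  qed simp
  then show ?thesis by (metis of_int_of_nat_eq of_nat_sum)
qed

lemma bet_irrat: "bet s \<notin> \<rat>"
proof
  assume "bet s \<in> \<rat>"
  then obtain a :: int and b :: nat where b: "b > 0" "bet s = of_int a / of_nat b"
    by (metis Rats_cases' of_int_of_nat_eq zero_less_imp_eq_int)
  define m where "m = b"
  obtain P where P: "real (qq s m) * (\<Sum>k<Suc m. 1 / real (qq s k)) = of_int P"
    using partial_int by blast
  have qp: "real (qq s m) > 0" using qq_pos[OF lim, of m] by simp
  have e: "ee m = bet s - (\<Sum>k<Suc m. 1 / real (qq s k))" using bet_split[of m] by simp
  have "real b * real (qq s m) * ee m = real b * real (qq s m) * bet s - real b * (real (qq s m) * (\<Sum>k<Suc m. 1 / real (qq s k)))"
    unfolding e by (simp add: algebra_simps)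
  also have "\<dots> = real b * real (qq s m) * bet s - real b * of_int P" using P by simp
  finally have "real b * real (qq s m) * ee m = real b * real (qq s m) * bet s - real b * of_int P" .
  also have "\<dots> = of_int (a * int (qq s m) - int b * P)"
    using b by (simp add: algebra_simps)
  finally have eq: "real b * real (qq s m) * ee m = of_int (a * int (qq s m) - int b * P)" .
  have pos: "real b * real (qq s m) * ee m > 0" using b qp ee_pos[of m] by simp
  have "real b * real (qq s m) * ee m \<le> real b * real (qq s m) * (2 / real (qq s (Suc m)))"
    using ee_le[of m] b qp by (intro mult_left_mono) auto
  also have "\<dots> \<le> real b * real (qq s m) * (2 / (real (qq s m) * 2^(m+3)))"
    using qq_grow[OF lim, of m] qp b qq_pos[OF lim, of "Suc m"]
    by (intro mult_left_mono divide_left_mono) (auto intro!: mult_pos_pos)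
  also have "\<dots> = real b / 2^(m+2)" using qp by (simp add: field_simps power_add)
  also have "\<dots> < 1"
  proof -
    have "real b < 2^b" by (metis of_nat_less_two_power)
    also have "(2::real)^b \<le> 2^(m+2)" unfolding m_def by (intro power_increasing) auto
    finally show ?thesis by simp
  qed
  finally have "of_int (a * int (qq s m) - int b * P) < (1::real)" using eq by simp
  moreover have "of_int (a * int (qq s m) - int b * P) > (0::real)" using eq pos by simp
  ultimately show False by (metis of_int_0_less_iff of_int_less_1_iff not_less zero_less_iff_neq_zero
      int_one_le_iff_zero_less less_le_trans order.strict_iff_not)
qed

end



context
  fixes s :: "nat \<Rightarrow> real"
  assumes lim: "filterlim (\<lambda>n. s n / real n) at_top sequentially"
begin

lemma block_ineq:
  assumes n1: "LL s (Suc k) \<le> n" and n2: "n < LL s (Suc (Suc k))"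
    and M: "M \<le> real (Suc k)"
    and good: "circ_norm (real (qq s (Suc k)) * z) \<ge> 1 / 2^(Suc k + 1)"
  shows "s n * circ_norm (z + real n * bet s) \<ge> M"
proof -
  define m where "m = Suc k"
  define Q where "Q = real (qq s m)"
  define S where "S = (\<Sum>j<Suc m. 1 / real (qq s j))"
  define e where "e = ee s m"
  define L where "L = real (LL s m)"
  define L' where "L' = real (LL s (Suc m))"
  have Qp: "Q > 0" unfolding Q_def using qq_pos[OF lim, of m] by simp
  have Lp: "L \<ge> 1" unfolding L_def m_def using LL_pos[OF lim, of k] by simp
  have ep: "e > 0" unfolding e_def using ee_pos[OF lim] by simp
  have bet: "bet s = S + e" unfolding S_def e_def using bet_split[OF lim] by simp
  obtain P where P: "Q * S = of_int P" unfolding Q_def S_def using partial_int[OF lim] by blast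
  have QS: "Q = L * real (qq s k) * 2^(k+3)"
    unfolding Q_def L_def m_def by (simp add: qq.simps(2))
  have q2: "real (qq s (Suc m)) = L' * Q * 2^(m+3)"
    unfolding Q_def L'_def by (simp add: qq.simps(2))
  have L'p: "L' \<ge> 1" unfolding L'_def using LL_pos[OF lim, of m] by simp
  have "real n * e \<le> L' * (2 / real (qq s (Suc m)))"
  proof (rule mult_mono)
    show "real n \<le> L'" unfolding L'_def m_def using n2 by simp
    show "e \<le> 2 / real (qq s (Suc m))" unfolding e_def by (rule ee_le[OF lim])
  qed (use ep L'p in auto)
  also have "\<dots> = 1 / (Q * 2^(m+2))" unfolding q2 using L'p Qp by (simp add: field_simps power_add)
  finally have err: "real n * e \<le> 1 / (Q * 2^(m+2))" .
  have "circ_norm (Q * (z + real n * S)) = circ_norm (Q * z + of_int (int n * P))"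
  proof -
    have "Q * (z + real n * S) = Q * z + real n * (Q * S)" by (simp add: algebra_simps)
    then show ?thesis using P by simp
  qed
  also have "\<dots> = circ_norm (Q * z)" by (rule cn_shift)
  finally have sh: "circ_norm (Q * (z + real n * S)) = circ_norm (Q * z)" .
  have "circ_norm (Q * (z + real n * S)) \<le> Q * circ_norm (z + real n * S)"
    unfolding Q_def by (rule cn_mult)
  then have "circ_norm (Q * z) / Q \<le> circ_norm (z + real n * S)"
    using sh Qp by (simp add: field_simps)
  moreover have "1 / (Q * 2^(m+1)) \<le> circ_norm (Q * z) / Q"
    using good Qp unfolding Q_def m_def by (simp add: field_simps)
  ultimately have mainterm: "1 / (Q * 2^(m+1)) \<le> circ_norm (z + real n * S)" by linarith
  have "circ_norm (z + real n * bet s) = circ_norm ((z + real n * S) + real n * e)"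
    unfolding bet by (simp add: algebra_simps)
  also have "\<dots> \<ge> circ_norm (z + real n * S) - \<bar>real n * e\<bar>" by (rule cn_tri)
  finally have "circ_norm (z + real n * bet s) \<ge> 1 / (Q * 2^(m+1)) - 1 / (Q * 2^(m+2))"
    using mainterm err ep by simp
  moreover have "1 / (Q * 2^(m+1)) - 1 / (Q * 2^(m+2)) = 1 / (Q * 2^(m+2))"
    using Qp by (simp add: field_simps power_add)
  ultimately have cnb: "circ_norm (z + real n * bet s) \<ge> 1 / (Q * 2^(m+2))" by simp
  have "real (qq s k * (k+1) * 4^(k+3)) * real n \<le> s n"
    using LL_bound[OF lim n1] .
  moreover have "real (qq s k * (k+1) * 4^(k+3)) * L \<le> real (qq s k * (k+1) * 4^(k+3)) * real n"
    using n1 unfolding L_def m_def by (intro mult_left_mono) auto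
  moreover have "real (qq s k * (k+1) * 4^(k+3)) * L = real m * 2^(m+2) * Q"
  proof -
    have f: "(4::real)^k = 2^k*2^k" by (simp flip: power_mult_distrib)
    show ?thesis unfolding QS m_def by (simp add: power_add f algebra_simps)
  qed
  ultimately have sn: "s n \<ge> real m * 2^(m+2) * Q" by linarith
  have "s n * circ_norm (z + real n * bet s) \<ge> (real m * 2^(m+2) * Q) * (1 / (Q * 2^(m+2)))"
  proof (rule mult_mono[OF sn cnb])
    show "0 \<le> s n" using sn Qp by (smt (verit) mult_nonneg_nonneg of_nat_0_le_iff zero_le_power)
  qed (use Qp in auto)
  also have "(real m * 2^(m+2) * Q) * (1 / (Q * 2^(m+2))) = real m" using Qp by simp
  finally show ?thesis using M unfolding m_def by simp
qed

end



definition JJ :: "(nat \<Rightarrow> real) \<Rightarrow> nat \<Rightarrow> int set" where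
  "JJ s m = {- int (qq s m) - 1 .. int (qq s m) + 1}"

definition AA :: "(nat \<Rightarrow> real) \<Rightarrow> real \<Rightarrow> nat \<Rightarrow> real set" where
  "AA s x m = (\<Union>j\<in>JJ s m. ball (x - of_int j / real (qq s m)) ((1 / 2^(m+1)) / real (qq s m)))"

context
  fixes s :: "nat \<Rightarrow> real"
  assumes lim: "filterlim (\<lambda>n. s n / real n) at_top sequentially"
begin

lemma AA_sets: "AA s x m \<in> sets lborel"
proof -
  have "open (AA s x m)" unfolding AA_def by (intro open_UN) auto
  then show ?thesis by (simp add: borel_open)
qed

lemma AA_emeasure: "emeasure lborel (AA s x m) \<le> ennreal (5 / 2^m)"
proof -
  define Q where "Q = real (qq s m)"
  define r where "r = (1 / 2^(m+1)) / Q"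
  have Qp: "Q \<ge> 1" unfolding Q_def using qq_pos[OF lim, of m] by simp
  have rp: "r \<ge> 0" unfolding r_def using Qp by simp
  have "emeasure lborel (AA s x m) \<le> (\<Sum>j\<in>JJ s m. emeasure lborel (ball (x - of_int j / Q) r))"
    unfolding AA_def Q_def r_def by (intro emeasure_subadditive_finite) (auto simp: JJ_def)
  also have "\<dots> = (\<Sum>j\<in>JJ s m. ennreal (2 * r))"
    using rp by (intro sum.cong) (auto simp: ball_eq_greaterThanLessThan)
  also have "\<dots> = ennreal (real (card (JJ s m)) * (2 * r))"
    using rp by (simp add: ennreal_mult ennreal_of_nat_eq_real_of_nat)
  also have "\<dots> \<le> ennreal (5 / 2^m)"
  proof (rule ennreal_leI)
    have c: "real (card (JJ s m)) = 2 * Q + 3" unfolding JJ_def Q_def by simp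
    have "(2 * Q + 3) * (2 * r) = (2 * Q + 3) / Q / 2^m"
      unfolding r_def using Qp by (simp add: field_simps)
    also have "\<dots> \<le> 5 / 2^m"
      using Qp by (intro divide_right_mono) (auto simp: field_simps)
    finally show "real (card (JJ s m)) * (2 * r) \<le> 5 / 2^m" using c by simp
  qed
  finally show ?thesis .
qed

lemma AA_AE: "AE y in lborel. eventually (\<lambda>m. y \<in> space lborel - AA s x m) sequentially"
proof (rule borel_cantelli_AE1)
  show "AA s x n \<in> sets lborel" for n by (rule AA_sets)
  show "emeasure lborel (AA s x n) < \<infinity>" for n
    using AA_emeasure[of x n] by (simp add: le_less_trans)
  show "summable (\<lambda>n. measure lborel (AA s x n))"
  proof (rule summable_comparison_test')
    show "summable (\<lambda>n. 5 * (1/2::real)^n)" by (intro summable_mult summable_geometric) simp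
    fix n
    have "measure lborel (AA s x n) \<le> enn2real (ennreal (5 / 2^n))"
      unfolding measure_def by (rule enn2real_mono[OF AA_emeasure]) simp
    then show "norm (measure lborel (AA s x n)) \<le> 5 * (1/2::real)^n"
      by (simp add: power_divide)
  qed
qed

end



lemma block_find:
  fixes L :: "nat \<Rightarrow> nat"
  assumes sm: "strict_mono L" and n: "L M \<le> n"
  shows "\<exists>m\<ge>M. L m \<le> n \<and> n < L (Suc m)"
proof -
  define S where "S = {k. L k \<le> n}"
  have fin: "finite S"
  proof (rule finite_subset)
    show "S \<subseteq> {..n}" unfolding S_def using strict_mono_imp_increasing[OF sm] by (auto intro: le_trans)
  qed simp
  have MS: "M \<in> S" using n unfolding S_def by simp
  define m where "m = Max S"
  have "m \<in> S" unfolding m_def using fin MS by (intro Max_in) auto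
  moreover have "M \<le> m" unfolding m_def using fin MS by simp
  moreover have "Suc m \<notin> S" unfolding m_def using fin MS
    by (metis Max_ge Suc_n_not_le_n)
  ultimately show ?thesis unfolding S_def by auto
qed

theorem theorem4p7:
  fixes s :: "nat \<Rightarrow> real"
  assumes "\<And>n. n \<ge> 1 \<Longrightarrow> s n > 0"
    and "filterlim (\<lambda>n. s n / real n) at_top sequentially"
  shows "\<exists>\<beta>::real. \<beta> \<notin> \<rat> \<and>
    (AE p in (lborel \<Otimes>\<^sub>M lborel).
       p \<in> {0..<1} \<times> {0..<1} \<longrightarrow>
       liminf (\<lambda>n. ereal (s n * circ_norm (((rot \<beta>) ^^ n) (fst p) - snd p))) = \<infinity>)"
proof -
  note lim = assms(2)
  define Good where "Good p \<longleftrightarrow> (\<exists>K. \<forall>m\<ge>K. \<forall>j\<in>JJ s m.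
      \<not> dist (snd p) (fst p - of_int j / real (qq s m)) < (1 / 2^(m+1)) / real (qq s m))" for p :: "real \<times> real"
  have meas: "{p \<in> space (lborel \<Otimes>\<^sub>M lborel). Good p} \<in> sets (lborel \<Otimes>\<^sub>M lborel)"
    unfolding Good_def by measurable
  have ae2: "AE x in lborel. AE y in lborel. Good (x, y)"
  proof (rule AE_I2)
    fix x
    show "AE y in lborel. Good (x, y)"
      using AA_AE[OF lim, of x]
    proof (rule eventually_mono)
      fix y assume "eventually (\<lambda>m. y \<in> space lborel - AA s x m) sequentially"
      then obtain K where K: "\<And>m. m \<ge> K \<Longrightarrow> y \<notin> AA s x m" by (auto simp: eventually_sequentially)
      show "Good (x, y)" unfolding Good_def
        using K by (auto simp: AA_def dist_commute)
    qed
  qed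
  have ps: "pair_sigma_finite lborel lborel"
    by (simp add: pair_sigma_finite_def lborel.sigma_finite_measure_axioms)
  have aeG: "AE p in lborel \<Otimes>\<^sub>M lborel. Good p"
    by (rule pair_sigma_finite.AE_pair_measure[OF ps meas]) (use ae2 in simp)
  define \<beta> where "\<beta> = bet s"
  have main: "liminf (\<lambda>n. ereal (s n * circ_norm (((rot \<beta>) ^^ n) (fst p) - snd p))) = \<infinity>"
    if G: "Good p" and p01: "p \<in> {0..<1} \<times> {0..<1}" for p
  proof -
    define x where "x = fst p"
    define y where "y = snd p"
    define z where "z = x - y"
    have zb: "\<bar>z\<bar> < 1" using p01 unfolding z_def x_def y_def by (auto simp: mem_Times_iff)
    obtain K where K: "\<And>m j. m \<ge> K \<Longrightarrow> j \<in> JJ s m \<Longrightarrow>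
        \<not> dist y (x - of_int j / real (qq s m)) < (1 / 2^(m+1)) / real (qq s m)"
      using G unfolding Good_def x_def y_def by blast
    have goodz: "circ_norm (real (qq s m) * z) \<ge> 1 / 2^(m+1)" if "m \<ge> K" for m
    proof (rule ccontr)
      define Q where "Q = real (qq s m)"
      have Qp: "Q \<ge> 1" unfolding Q_def using qq_pos[OF lim, of m] by simp
      assume "\<not> ?thesis"
      then have c: "\<bar>Q * z - of_int (round (Q * z))\<bar> < 1 / 2^(m+1)"
        unfolding Q_def by (simp add: cn_eq)
      define j where "j = round (Q * z)"
      have "(1::real) \<le> 2^(m+1)" by (rule one_le_power) simp
      then have d1: "(1::real) / 2^(m+1) \<le> 1" by simp
      have "\<bar>Q * z\<bar> < Q" using zb Qp by (simp add: abs_mult)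
      then have "\<bar>of_int j\<bar> < Q + 1" using c d1 unfolding j_def by linarith
      then have "j \<in> JJ s m" unfolding JJ_def Q_def by auto
      moreover have "dist y (x - of_int j / Q) < (1 / 2^(m+1)) / Q"
      proof -
        have "dist y (x - of_int j / Q) = \<bar>Q * z - of_int j\<bar> / Q"
          unfolding dist_real_def z_def using Qp by (simp add: field_simps abs_div[symmetric] abs_minus_commute)
        moreover have "\<bar>Q * z - of_int j\<bar> / Q < (1 / 2^(m+1)) / Q"
          using c Qp unfolding j_def by (intro divide_strict_right_mono) auto
        ultimately show ?thesis by simp
      qed
      ultimately show False using K[OF that] unfolding Q_def by blast
    qed
    have "((\<lambda>n. ereal (s n * circ_norm (((rot \<beta>) ^^ n) x - y))) \<longlongrightarrow> \<infinity>) sequentially"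
      unfolding tendsto_PInfty
    proof
      fix r :: real
      define M where "M = max K (max (nat \<lceil>r\<rceil> + 1) 1)"
      have "eventually (\<lambda>n. n \<ge> LL s M) sequentially" by (rule eventually_ge_at_top)
      then show "eventually (\<lambda>n. ereal r < ereal (s n * circ_norm (((rot \<beta>) ^^ n) x - y))) sequentially"
      proof (rule eventually_mono)
        fix n assume "n \<ge> LL s M"
        then obtain m where m: "m \<ge> M" "LL s m \<le> n" "n < LL s (Suc m)"
          using block_find[OF LL_smono[OF lim]] by blast
        then obtain k where k: "m = Suc k" using M_def by (cases m) auto
        have A1: "s n * circ_norm (z + real n * bet s) \<ge> real m"
          using block_ineq[OF lim, of k n "real m" z] m k goodz[of m] M_def by auto
        have A2: "real m > r" using m M_def by linarith
        obtain i where i: "((rot \<beta>) ^^ n) x = x + real n * \<beta> + of_int i"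
          using rot_iter by blast
        have "circ_norm (((rot \<beta>) ^^ n) x - y) = circ_norm (z + real n * bet s + of_int i)"
          unfolding i by (simp add: z_def \<beta>_def algebra_simps)
        also have "\<dots> = circ_norm (z + real n * bet s)" by (rule cn_shift)
        finally show "ereal r < ereal (s n * circ_norm (((rot \<beta>) ^^ n) x - y))"
          using A1 A2 by simp
      qed
    qed
    then show ?thesis unfolding x_def y_def
      using Liminf_PInfty[of sequentially] by simp
  qed
  show ?thesis
  proof (intro exI conjI)
    show "\<beta> \<notin> \<rat>" unfolding \<beta>_def by (rule bet_irrat[OF lim])
    show "AE p in lborel \<Otimes>\<^sub>M lborel. p \<in> {0..<1} \<times> {0..<1} \<longrightarrow>
       liminf (\<lambda>n. ereal (s n * circ_norm (((rot \<beta>) ^^ n) (fst p) - snd p))) = \<infinity>"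
      using aeG by (rule eventually_mono) (use main in blast)
  qed
qed



end
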